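(* Let $\mu$ be a finite compactly supported complex Borel measure on $\mathbb{R}^d$. Then the following are equivalent: (a) $\mu$ is continuous, i.e. $\mu(\{x\})=0$ for every $x\in\mathbb{R}^d$; (b) the measure $\mu_\zeta$ is continuous for $\sigma$-almost every $\zeta\in S$.
   Context: $S=\{\zeta\in\mathbb{R}^d:|\zeta|=1\}$ is the unit sphere with surface (Lebesgue) measure $\sigma$. For $\zeta\in S$, $\mu_\zeta$ is the complex Borel measure on $\mathbb{R}$ defined as the pushforward of $\mu$ under $x\mapsto x\cdot\zeta$, i.e. $\int\phi\,d\mu_\zeta=\int\phi(x\cdot\zeta)\,d\mu(x)$. *)

theory Defs
  imports "HOL-Analysis.Analysis"
begin

text \<open>A complex Borel measure on a Euclidean space: a complex-valued, countably
additive set function on the Borel sets (values on non-Borel sets are irrelevant).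
Complex values make it automatically finite (bounded total variation).\<close>
definition complex_borel_measure :: "('a::euclidean_space set \<Rightarrow> complex) \<Rightarrow> bool" where
  "complex_borel_measure \<mu> \<longleftrightarrow>
     \<mu> {} = 0 \<and>
     (\<forall>A :: nat \<Rightarrow> 'a set. range A \<subseteq> sets borel \<longrightarrow> disjoint_family A \<longrightarrow>
        (\<lambda>n. \<mu> (A n)) sums \<mu> (\<Union>n. A n))"

definition compactly_supported :: "('a::euclidean_space set \<Rightarrow> complex) \<Rightarrow> bool" where
  "compactly_supported \<mu> \<longleftrightarrow>
     (\<exists>K. compact K \<and> (\<forall>A \<in> sets borel. A \<inter> K = {} \<longrightarrow> \<mu> A = 0))"

definition continuous_measure :: "('a set \<Rightarrow> complex) \<Rightarrow> bool" where
  "continuous_measure \<mu> \<longleftrightarrow> (\<forall>x. \<mu> {x} = 0)"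

definition proj_measure :: "('a::euclidean_space set \<Rightarrow> complex) \<Rightarrow> 'a \<Rightarrow> (real set \<Rightarrow> complex)" where
  "proj_measure \<mu> \<zeta> = (\<lambda>B. \<mu> ((\<lambda>x. x \<bullet> \<zeta>) -` B))"

text \<open>Surface measure on the unit sphere S, defined via polar coordinates:
\<sigma>(A) = d * \<lambda>{r \<zeta> : 0 < r < 1, \<zeta> \<in> A}, i.e. d times the pushforward of
Lebesgue measure on the punctured unit ball under x \<mapsto> x / |x|.\<close>
definition sphere_measure :: "'a::euclidean_space measure" where
  "sphere_measure =
     density
       (distr (restrict_space lborel (ball 0 1 - {0})) (restrict_space borel (sphere 0 1))
          (\<lambda>x. x /\<^sub>R norm x))
       (\<lambda>_. ennreal (real DIM('a)))"

end

theory Submission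
  imports Defs
begin


lemma sph_meas: "(\<lambda>x::'a::euclidean_space. x /\<^sub>R norm x) \<in> measurable (restrict_space lborel (ball 0 1 - {0})) (restrict_space borel (sphere 0 1))"
  apply (rule measurable_restrict_space2)
   apply (auto simp: space_restrict_space)[1]
  apply (rule measurable_restrict_space1)
  by measurable

lemma sph_top: "sphere 0 1 \<in> sets (restrict_space borel (sphere (0::'a::euclidean_space) 1))"
  using sets.top[of "restrict_space borel (sphere (0::'a) 1)"] by (simp add: space_restrict_space)

lemma sph_pre: "A \<in> sets (restrict_space borel (sphere 0 1)) \<Longrightarrow>
  (\<lambda>x::'a::euclidean_space. x /\<^sub>R norm x) -` A \<inter> (ball 0 1 - {0}) \<in> sets lborel"
  using measurable_sets[OF sph_meas, of A] by (simp add: space_restrict_space sets_restrict_space_iff)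

lemma sphere_space: "space (sphere_measure::'a::euclidean_space measure) = sphere 0 1"
  unfolding sphere_measure_def by (simp add: space_restrict_space)

lemma sphere_sets: "sets (sphere_measure::'a::euclidean_space measure) = sets (restrict_space borel (sphere 0 1))"
  unfolding sphere_measure_def by simp

lemma sphere_emeasure:
  assumes "A \<in> sets (restrict_space borel (sphere 0 1))"
  shows "emeasure (sphere_measure::'a::euclidean_space measure) A
     = ennreal (real DIM('a)) * emeasure lborel ((\<lambda>x. x /\<^sub>R norm x) -` A \<inter> (ball 0 1 - {0}))"
proof -
  have "emeasure (sphere_measure::'a measure) A = (\<integral>\<^sup>+x. ennreal (real DIM('a)) * indicator A x
     \<partial>distr (restrict_space lborel (ball 0 1 - {0})) (restrict_space borel (sphere 0 1)) (\<lambda>x. x /\<^sub>R norm x))"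
    unfolding sphere_measure_def using assms by (subst emeasure_density) auto
  also have "\<dots> = ennreal (real DIM('a)) * emeasure (distr (restrict_space lborel (ball 0 1 - {0})) (restrict_space borel (sphere 0 1)) (\<lambda>x::'a. x /\<^sub>R norm x)) A"
    using assms by (subst nn_integral_cmult_indicator) auto
  also have "\<dots> = ennreal (real DIM('a)) * emeasure (restrict_space lborel (ball 0 1 - {0})) ((\<lambda>x. x /\<^sub>R norm x) -` A \<inter> (ball 0 1 - {0}))"
    using assms sph_meas by (subst emeasure_distr) (auto simp: space_restrict_space)
  also have "\<dots> = ennreal (real DIM('a)) * emeasure lborel ((\<lambda>x. x /\<^sub>R norm x) -` A \<inter> (ball 0 1 - {0}))"
  proof -
    have "(\<lambda>x::'a. x /\<^sub>R norm x) -` A \<inter> (ball 0 1 - {0}) \<in> sets lborel"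
      using measurable_sets[OF sph_meas assms] by (simp add: space_restrict_space sets_restrict_space_iff)
    then show ?thesis by (subst emeasure_restrict_space) auto
  qed
  finally show ?thesis .
qed

lemma sphere_finite: "finite_measure (sphere_measure::'a::euclidean_space measure)"
proof
  have "emeasure (sphere_measure::'a measure) (space sphere_measure) = ennreal (real DIM('a)) * emeasure lborel ((\<lambda>x. x /\<^sub>R norm x) -` sphere 0 1 \<inter> (ball (0::'a) 1 - {0}))"
    by (subst sphere_emeasure) (auto simp: sphere_space space_restrict_space sph_top)
  also have "\<dots> \<le> ennreal (real DIM('a)) * emeasure lborel (ball (0::'a) 1)"
    by (intro mult_left_mono emeasure_mono) auto
  also have "\<dots> < \<infinity>" using emeasure_lborel_ball_finite[of "0::'a" 1]
    by (simp add: ennreal_mult_less_top)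
  finally show "emeasure (sphere_measure::'a measure) (space sphere_measure) \<noteq> \<infinity>" by simp
qed

lemma sphere_pos: "emeasure (sphere_measure::'a::euclidean_space measure) (space sphere_measure) \<noteq> 0"
proof -
  have pre: "(\<lambda>x. x /\<^sub>R norm x) -` sphere 0 1 \<inter> (ball (0::'a) 1 - {0}) = ball 0 1 - {0}"
    by auto
  have "emeasure lborel (ball (0::'a) 1 - {0}) = emeasure lborel (ball (0::'a) 1)"
    by (rule emeasure_Diff_null_set) auto
  moreover have "emeasure lborel (ball (0::'a) 1) \<noteq> 0"
    using content_ball_pos[of 1 "0::'a"] by (auto simp: measure_def)
  ultimately show ?thesis
    by (subst sphere_emeasure) (auto simp: sphere_space space_restrict_space pre sph_top)
qed

lemma sphere_null:
  assumes "v \<noteq> 0"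
  shows "emeasure (sphere_measure::'a::euclidean_space measure) {z \<in> sphere 0 1. v \<bullet> z = 0} = 0"
proof -
  have hs: "{x::'a. v \<bullet> x = 0} \<in> null_sets lborel"
  proof -
    have "{x::'a. v \<bullet> x = 0} \<in> null_sets lebesgue"
      using negligible_hyperplane[of v 0] assms negligible_iff_null_sets by auto
    moreover have "{x::'a. v \<bullet> x = 0} \<in> sets lborel" by measurable
    ultimately show ?thesis using null_sets_completion_iff by blast
  qed
  have "(\<lambda>x. x /\<^sub>R norm x) -` {z \<in> sphere 0 1. v \<bullet> z = 0} \<inter> (ball (0::'a) 1 - {0}) \<subseteq> {x. v \<bullet> x = 0}"
    by auto
  then have "emeasure lborel ((\<lambda>x. x /\<^sub>R norm x) -` {z \<in> sphere 0 1. v \<bullet> z = 0} \<inter> (ball (0::'a) 1 - {0})) = 0"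
  proof -
    have "{z \<in> sphere 0 1. v \<bullet> z = 0} \<in> sets (restrict_space borel (sphere (0::'a) 1))"
      by (auto simp: sets_restrict_space_iff)
    from sph_pre[OF this] show ?thesis using hs null_sets_subset \<open>_ \<subseteq> _\<close> by blast
  qed
  then show ?thesis
    apply (subst sphere_emeasure)
    by (auto simp: sets_restrict_space_iff)
qed



lemma cbm_empty: "complex_borel_measure \<mu> \<Longrightarrow> \<mu> {} = 0"
  unfolding complex_borel_measure_def by simp

lemma cbm_sums: "complex_borel_measure \<mu> \<Longrightarrow> range A \<subseteq> sets borel \<Longrightarrow> disjoint_family A \<Longrightarrow>
   (\<lambda>n. \<mu> (A n)) sums \<mu> (\<Union>n. A n)"
  unfolding complex_borel_measure_def by blast

lemma cbm_finsum:
  fixes B :: "nat \<Rightarrow> 'a::euclidean_space set" and N :: nat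
  assumes m: "complex_borel_measure \<mu>" and B: "\<And>n. n < N \<Longrightarrow> B n \<in> sets borel"
    and d: "\<And>n m. n < N \<Longrightarrow> m < N \<Longrightarrow> n \<noteq> m \<Longrightarrow> B n \<inter> B m = {}"
  shows "\<mu> (\<Union>n<N. B n) = (\<Sum>n<N. \<mu> (B n))"
proof -
  define F where "F n = (if n < N then B n else {})" for n
  have r: "range F \<subseteq> sets borel" using B by (auto simp: F_def)
  have df: "disjoint_family F" using d by (auto simp: F_def disjoint_family_on_def)
  have U: "(\<Union>n. F n) = (\<Union>n<N. B n)" by (auto simp: F_def split: if_splits)
  have "(\<lambda>n. \<mu> (F n)) sums \<mu> (\<Union>n<N. B n)" using cbm_sums[OF m r df] U by simp
  moreover have "(\<lambda>n. \<mu> (F n)) sums (\<Sum>n\<in>{..<N}. \<mu> (F n))"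
    by (rule sums_finite) (auto simp: F_def cbm_empty[OF m])
  ultimately show ?thesis using sums_unique2 by (force simp: F_def)
qed

lemma cbm_add:
  assumes m: "complex_borel_measure \<mu>" and "A \<in> sets borel" "B \<in> sets borel" "A \<inter> B = {}"
  shows "\<mu> (A \<union> B) = \<mu> A + \<mu> B"
proof -
  define C where "C n = (if n = 0 then A else B)" for n :: nat
  have "\<mu> (\<Union>n<2. C n) = (\<Sum>n<2. \<mu> (C n))"
    by (rule cbm_finsum[OF m]) (use assms in \<open>auto simp: C_def\<close>)
  moreover have "(\<Union>n<2. C n) = A \<union> B" by (auto simp: C_def numeral_2_eq_2 lessThan_Suc)
  ultimately show ?thesis by (simp add: C_def numeral_2_eq_2 lessThan_Suc)
qed

lemma cbm_diff:
  assumes m: "complex_borel_measure \<mu>" and "A \<in> sets borel" "B \<in> sets borel" "B \<subseteq> A"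
  shows "\<mu> A = \<mu> B + \<mu> (A - B)"
proof -
  have "A = B \<union> (A - B)" using assms by auto
  then show ?thesis using cbm_add[OF m, of B "A - B"] assms by auto
qed

lemma cbm_bounded:
  assumes m: "complex_borel_measure \<mu>"
  shows "\<exists>K. \<forall>B\<in>sets borel. cmod (\<mu> B) \<le> K"
proof (rule ccontr)
  assume nb: "\<not> ?thesis"
  define U where "U E \<longleftrightarrow> E \<in> sets borel \<and> (\<forall>K. \<exists>B\<in>sets borel. B \<subseteq> E \<and> cmod (\<mu> B) > K)" for E
  have U0: "U UNIV" using nb by (auto simp: U_def not_le)
  have step: "\<exists>p. U (fst p) \<and> snd p \<in> sets borel \<and> snd p \<subseteq> E \<and> fst p \<subseteq> E \<and> snd p \<inter> fst p = {}
       \<and> cmod (\<mu> (snd p)) > 1" if UE: "U E" for E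
  proof -
    have E: "E \<in> sets borel" using UE by (simp add: U_def)
    obtain B where B: "B \<in> sets borel" "B \<subseteq> E" "cmod (\<mu> B) > cmod (\<mu> E) + 1"
      using UE unfolding U_def by blast
    have EB: "E - B \<in> sets borel" using B E by auto
    have sp: "\<mu> E = \<mu> B + \<mu> (E - B)" using cbm_diff[OF m E B(1,2)] .
    have c1: "cmod (\<mu> (E - B)) > 1"
    proof -
      have "cmod (\<mu> B) \<le> cmod (\<mu> E) + cmod (\<mu> (E - B))"
        using sp norm_triangle_ineq4[of "\<mu> E" "\<mu> (E - B)"] by simp
      then show ?thesis using B(3) by linarith
    qed
    have c2: "cmod (\<mu> B) > 1" using B(3) by (smt (verit) norm_ge_zero)
    have "U B \<or> U (E - B)"
    proof (rule ccontr)
      assume "\<not> (U B \<or> U (E - B))"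
      then obtain K1 K2 where K1: "\<forall>C\<in>sets borel. C \<subseteq> B \<longrightarrow> cmod (\<mu> C) \<le> K1"
        and K2: "\<forall>C\<in>sets borel. C \<subseteq> E - B \<longrightarrow> cmod (\<mu> C) \<le> K2"
        using B(1) EB unfolding U_def by (auto simp: not_less)
      obtain C where C: "C \<in> sets borel" "C \<subseteq> E" "cmod (\<mu> C) > K1 + K2"
        using UE unfolding U_def by blast
      have "\<mu> C = \<mu> (C \<inter> B) + \<mu> (C - C \<inter> B)"
        using cbm_diff[OF m C(1), of "C \<inter> B"] C B by auto
      moreover have "C - C \<inter> B = C \<inter> (E - B)" using C by auto
      ultimately have "cmod (\<mu> C) \<le> cmod (\<mu> (C \<inter> B)) + cmod (\<mu> (C \<inter> (E - B)))"
        by (simp add: norm_triangle_ineq)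
      also have "\<dots> \<le> K1 + K2" using K1 K2 C B EB by (intro add_mono) auto
      finally show False using C by simp
    qed
    then show ?thesis
    proof
      assume "U B" then show ?thesis
        using EB c1 B by (intro exI[of _ "(B, E - B)"]) auto
    next
      assume "U (E - B)" then show ?thesis
        using c2 B by (intro exI[of _ "(E - B, B)"]) auto
    qed
  qed
  define st where "st E = (SOME p. U (fst p) \<and> snd p \<in> sets borel \<and> snd p \<subseteq> E \<and> fst p \<subseteq> E \<and> snd p \<inter> fst p = {}
       \<and> cmod (\<mu> (snd p)) > 1)" for E
  have st: "U (fst (st E)) \<and> snd (st E) \<in> sets borel \<and> snd (st E) \<subseteq> E \<and> fst (st E) \<subseteq> E \<and> snd (st E) \<inter> fst (st E) = {}
       \<and> cmod (\<mu> (snd (st E))) > 1" if "U E" for E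
    unfolding st_def by (rule someI_ex[OF step[OF that]])
  define E where "E n = rec_nat UNIV (\<lambda>_ E. fst (st E)) n" for n
  have E0: "E 0 = UNIV" and ES: "E (Suc n) = fst (st (E n))" for n by (simp_all add: E_def)
  have UE: "U (E n)" for n by (induction n) (use U0 st in \<open>auto simp: E0 ES\<close>)
  define F where "F n = snd (st (E n))" for n
  have Fb: "F n \<in> sets borel" and FE: "F n \<subseteq> E n" and FD: "F n \<inter> E (Suc n) = {}"
    and F1: "cmod (\<mu> (F n)) > 1" and Emono: "E (Suc n) \<subseteq> E n" for n
    using st[OF UE[of n]] by (auto simp: F_def ES)
  have Ele: "n \<le> n' \<Longrightarrow> E n' \<subseteq> E n" for n n'
    by (rule lift_Suc_antimono_le[of E]) (use Emono in auto)
  have dj: "F n \<inter> F n' = {}" if "n < n'" for n n'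
  proof -
    have "F n' \<subseteq> E (Suc n)" using FE[of n'] Ele[of "Suc n" n'] that by auto
    then show ?thesis using FD[of n] by auto
  qed
  have "disjoint_family F"
    unfolding disjoint_family_on_def
    by (metis dj inf_commute linorder_neqE_nat)
  then have "summable (\<lambda>n. \<mu> (F n))"
    using cbm_sums[OF m, of F] Fb by (auto simp: sums_iff)
  then have "(\<lambda>n. \<mu> (F n)) \<longlonglongrightarrow> 0" by (rule summable_LIMSEQ_zero)
  then have "eventually (\<lambda>n. cmod (\<mu> (F n)) < 1) sequentially"
    by (simp add: tendsto_iff dist_norm) 
  then obtain n where "cmod (\<mu> (F n)) < 1" by (auto simp: eventually_sequentially)
  then show False using F1[of n] by simp
qed



definition pv :: "('a::euclidean_space set \<Rightarrow> complex) \<Rightarrow> complex \<Rightarrow> 'a set \<Rightarrow> real" where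
  "pv \<mu> c A = Sup {Re (c * \<mu> B) | B. B \<in> sets borel \<and> B \<subseteq> A}"

context
  fixes \<mu> :: "'a::euclidean_space set \<Rightarrow> complex" and c :: complex
  assumes m: "complex_borel_measure \<mu>"
begin

lemma pv_bdd: "bdd_above {Re (c * \<mu> B) | B. B \<in> sets borel \<and> B \<subseteq> A}"
proof -
  obtain K where K: "\<forall>B\<in>sets borel. cmod (\<mu> B) \<le> K" using cbm_bounded[OF m] by blast
  have "Re (c * \<mu> B) \<le> cmod c * K" if "B \<in> sets borel" for B
  proof -
    have "Re (c * \<mu> B) \<le> cmod (c * \<mu> B)" by (rule complex_Re_le_cmod)
    also have "\<dots> = cmod c * cmod (\<mu> B)" by (simp add: norm_mult)
    also have "\<dots> \<le> cmod c * K" using K that by (simp add: mult_left_mono)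
    finally show ?thesis .
  qed
  then show ?thesis by (auto simp: bdd_above_def)
qed

lemma pv_upper: "B \<in> sets borel \<Longrightarrow> B \<subseteq> A \<Longrightarrow> Re (c * \<mu> B) \<le> pv \<mu> c A"
  unfolding pv_def by (rule cSup_upper[OF _ pv_bdd]) blast

lemma pv_nonneg: "0 \<le> pv \<mu> c A"
  using pv_upper[of "{}" A] cbm_empty[OF m] by simp

lemma pv_least: "(\<And>B. B \<in> sets borel \<Longrightarrow> B \<subseteq> A \<Longrightarrow> Re (c * \<mu> B) \<le> y) \<Longrightarrow> pv \<mu> c A \<le> y"
  unfolding pv_def by (rule cSup_least) auto

lemma pv_empty: "pv \<mu> c {} = 0"
  using pv_least[of "{}" 0] pv_nonneg[of "{}"] cbm_empty[OF m] by force

lemma pv_approx: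
  assumes "e > 0"
  shows "\<exists>B. B \<in> sets borel \<and> B \<subseteq> A \<and> pv \<mu> c A - e < Re (c * \<mu> B)"
proof (rule ccontr)
  assume "\<not> ?thesis"
  then have "pv \<mu> c A \<le> pv \<mu> c A - e" by (intro pv_least) (auto simp: not_less)
  then show False using assms by simp
qed

lemma pv_partial:
  fixes A :: "nat \<Rightarrow> 'a set"
  assumes r: "range A \<subseteq> sets borel" and d: "disjoint_family A"
  shows "(\<Sum>n<N. pv \<mu> c (A n)) \<le> pv \<mu> c (\<Union>n. A n)"
proof (rule field_le_epsilon)
  fix e :: real assume e: "0 < e"
  have "\<forall>n. \<exists>B. B \<in> sets borel \<and> B \<subseteq> A n \<and> pv \<mu> c (A n) - e / (real N + 1) < Re (c * \<mu> B)"
    using pv_approx e by simp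
  then obtain B where B: "\<And>n. B n \<in> sets borel" "\<And>n. B n \<subseteq> A n"
    "\<And>n. pv \<mu> c (A n) - e / (real N + 1) < Re (c * \<mu> (B n))"
    by metis
  have dB: "B n \<inter> B k = {}" if "n \<noteq> k" for n k
    using d B(2)[of n] B(2)[of k] that unfolding disjoint_family_on_def by blast
  have "(\<Sum>n<N. pv \<mu> c (A n) - e / (real N + 1)) \<le> (\<Sum>n<N. Re (c * \<mu> (B n)))"
    using B(3) by (intro sum_mono) (simp add: less_imp_le)
  also have "\<dots> = Re (c * \<mu> (\<Union>n<N. B n))"
    using cbm_finsum[OF m, of N B] B(1) dB by (simp add: sum_distrib_left)
  also have "\<dots> \<le> pv \<mu> c (\<Union>n. A n)"
    using B by (intro pv_upper) auto
  finally have "(\<Sum>n<N. pv \<mu> c (A n)) - real N * (e / (real N + 1)) \<le> pv \<mu> c (\<Union>n. A n)"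
    by (simp add: sum_subtractf)
  moreover have "real N * (e / (real N + 1)) \<le> e"
    using e by (simp add: field_simps)
  ultimately show "(\<Sum>n<N. pv \<mu> c (A n)) \<le> pv \<mu> c (\<Union>n. A n) + e" by linarith
qed

lemma pv_sums:
  fixes A :: "nat \<Rightarrow> 'a set"
  assumes r: "range A \<subseteq> sets borel" and d: "disjoint_family A"
  shows "(\<lambda>n. pv \<mu> c (A n)) sums pv \<mu> c (\<Union>n. A n)"
proof -
  have s: "summable (\<lambda>n. pv \<mu> c (A n))"
    using pv_partial[OF r d] pv_nonneg by (intro summableI_nonneg_bounded) auto
  have le1: "suminf (\<lambda>n. pv \<mu> c (A n)) \<le> pv \<mu> c (\<Union>n. A n)"
    using pv_partial[OF r d] s by (intro suminf_le_const) auto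
  have le2: "pv \<mu> c (\<Union>n. A n) \<le> suminf (\<lambda>n. pv \<mu> c (A n))"
  proof (rule pv_least)
    fix B assume B: "B \<in> sets borel" "B \<subseteq> (\<Union>n. A n)"
    have rB: "range (\<lambda>n. B \<inter> A n) \<subseteq> sets borel" using B r by auto
    have dB: "disjoint_family (\<lambda>n. B \<inter> A n)" using d by (auto simp: disjoint_family_on_def)
    have "(\<lambda>n. \<mu> (B \<inter> A n)) sums \<mu> B"
    proof -
      have "B \<inter> (\<Union>n. A n) = B" using B by auto
      then show ?thesis using cbm_sums[OF m rB dB] by (simp flip: Int_UN_distrib)
    qed
    then have s1: "(\<lambda>n. Re (c * \<mu> (B \<inter> A n))) sums Re (c * \<mu> B)"
      by (intro sums_Re sums_mult)
    have le: "Re (c * \<mu> (B \<inter> A n)) \<le> pv \<mu> c (A n)" for n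
      using B r by (intro pv_upper) auto
    show "Re (c * \<mu> B) \<le> suminf (\<lambda>n. pv \<mu> c (A n))"
      by (rule sums_le[OF le s1 summable_sums[OF s]])
  qed
  show ?thesis using s le1 le2 by (simp add: sums_iff)
qed

end

definition tot :: "('a::euclidean_space set \<Rightarrow> complex) \<Rightarrow> 'a set \<Rightarrow> real" where
  "tot \<mu> A = pv \<mu> 1 A + pv \<mu> (-1) A + pv \<mu> \<i> A + pv \<mu> (-\<i>) A"

definition nu :: "('a::euclidean_space set \<Rightarrow> complex) \<Rightarrow> 'a measure" where
  "nu \<mu> = measure_of UNIV (sets borel) (\<lambda>A. ennreal (tot \<mu> A))"

lemma sets_nu[measurable_cong]: "sets (nu \<mu>) = sets borel"
  unfolding nu_def
  using sets.sigma_sets_eq[of borel] sets.space_closed[of borel] by (simp add: sets_measure_of)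

lemma space_nu: "space (nu \<mu>) = UNIV"
  unfolding nu_def by simp

context
  fixes \<mu> :: "'a::euclidean_space set \<Rightarrow> complex"
  assumes m: "complex_borel_measure \<mu>"
begin

lemma tot_nonneg: "0 \<le> tot \<mu> A"
  unfolding tot_def using pv_nonneg[OF m] by (simp add: add_nonneg_nonneg)

lemma emeasure_nu: "A \<in> sets borel \<Longrightarrow> emeasure (nu \<mu>) A = ennreal (tot \<mu> A)"
  unfolding nu_def
proof (rule emeasure_measure_of_sigma)
  show "sigma_algebra UNIV (sets borel)"
    using sets.sigma_algebra_axioms[of borel] by simp
  show "positive (sets borel) (\<lambda>A. ennreal (tot \<mu> A))"
    unfolding positive_def tot_def using pv_empty[OF m] by simp
  show "countably_additive (sets borel) (\<lambda>A. ennreal (tot \<mu> A))"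
    unfolding countably_additive_def
  proof (intro allI impI)
    fix A :: "nat \<Rightarrow> 'a set" assume r: "range A \<subseteq> sets borel" and d: "disjoint_family A"
    have "(\<lambda>n. tot \<mu> (A n)) sums tot \<mu> (\<Union>n. A n)"
      unfolding tot_def using pv_sums[OF m r d] by (intro sums_add) auto
    then show "(\<Sum>i. ennreal (tot \<mu> (A i))) = ennreal (tot \<mu> (\<Union> (range A)))"
      using tot_nonneg by (simp add: suminf_ennreal2 sums_iff)
  qed
qed

lemma finite_nu: "finite_measure (nu \<mu>)"
  by (rule finite_measureI) (simp add: space_nu emeasure_nu)

lemma nu_null:
  assumes A: "A \<in> sets borel" and z: "emeasure (nu \<mu>) A = 0"
  shows "\<mu> A = 0"
proof -
  have "tot \<mu> A = 0" using z emeasure_nu[OF A] tot_nonneg by simp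
  then have "pv \<mu> 1 A = 0" "pv \<mu> (-1) A = 0" "pv \<mu> \<i> A = 0" "pv \<mu> (-\<i>) A = 0"
    unfolding tot_def using pv_nonneg[OF m, of 1 A] pv_nonneg[OF m, of "-1" A]
      pv_nonneg[OF m, of "\<i>" A] pv_nonneg[OF m, of "-\<i>" A] by linarith+
  then have "Re (1 * \<mu> A) \<le> 0" "Re (-1 * \<mu> A) \<le> 0" "Re (\<i> * \<mu> A) \<le> 0" "Re (-\<i> * \<mu> A) \<le> 0"
    using pv_upper[OF m A order_refl, of 1] pv_upper[OF m A order_refl, of "-1"]
      pv_upper[OF m A order_refl, of "\<i>"] pv_upper[OF m A order_refl, of "-\<i>"] by simp_all
  then show ?thesis by (intro complex_eqI) auto
qed

end



lemma sphere_ident[measurable]: "(\<lambda>z. z) \<in> measurable (sphere_measure::'a::euclidean_space measure) borel"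
  by (subst measurable_cong_sets[OF sphere_sets refl]) (rule measurable_restrict_space1[OF measurable_ident_sets[OF refl]])

lemma sphere_int_zero:
  assumes "v \<noteq> 0"
  shows "(\<integral>\<^sup>+\<zeta>. (if v \<bullet> \<zeta> = 0 then 1 else 0) \<partial>(sphere_measure::'a::euclidean_space measure)) = 0"
proof -
  have "AE \<zeta> in (sphere_measure::'a measure). v \<bullet> \<zeta> \<noteq> 0"
    using sphere_null[OF assms]
    by (subst AE_iff_measurable[of "{z \<in> sphere 0 1. v \<bullet> z = 0}"])
       (auto simp: sphere_space sphere_sets sets_restrict_space_iff)
  then show ?thesis by (subst nn_integral_cong_AE[where v="\<lambda>_. 0"]) auto
qed

theorem lemma5p4:
  fixes \<mu> :: "'a::euclidean_space set \<Rightarrow> complex"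
  assumes "complex_borel_measure \<mu>"
    and "compactly_supported \<mu>"
  shows "continuous_measure \<mu> \<longleftrightarrow>
         (AE \<zeta> in (sphere_measure :: 'a measure). continuous_measure (proj_measure \<mu> \<zeta>))"
proof -
  note m = assms(1)
  define \<sigma> where "\<sigma> = (sphere_measure :: 'a measure)"
  define \<nu> where "\<nu> = nu \<mu>"
  interpret s: finite_measure \<sigma> unfolding \<sigma>_def by (rule sphere_finite)
  interpret n: finite_measure \<nu> unfolding \<nu>_def by (rule finite_nu[OF m])
  interpret sn: pair_sigma_finite \<sigma> \<nu> ..
  interpret nn: pair_sigma_finite \<nu> \<nu> ..
  have sets\<nu>[measurable_cong]: "sets \<nu> = sets borel" unfolding \<nu>_def by (rule sets_nu)
  have id\<sigma>[measurable]: "(\<lambda>z. z) \<in> measurable \<sigma> borel" unfolding \<sigma>_def by measurable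
  have null: "\<mu> A = 0" if "A \<in> sets borel" "emeasure \<nu> A = 0" for A
    using nu_null[OF m that(1)] that(2) unfolding \<nu>_def by simp
  have proj: "proj_measure \<mu> \<zeta> {t} = \<mu> {x. x \<bullet> \<zeta> = t}" for \<zeta> t
    unfolding proj_measure_def by (simp add: vimage_def)
  show ?thesis
  proof
    assume cont: "continuous_measure \<mu>"
    define g where "g \<zeta> x y = (if (x - y) \<bullet> \<zeta> = 0 \<and> x \<noteq> y then 1 else 0 :: ennreal)" for \<zeta> x y :: 'a
    have gm3: "(\<lambda>q. g (fst (fst q)) (snd (fst q)) (snd q)) \<in> borel_measurable ((\<sigma> \<Otimes>\<^sub>M \<nu>) \<Otimes>\<^sub>M \<nu>)"
      unfolding g_def by measurable
    have gm2: "(\<lambda>p. g (fst p) x (snd p)) \<in> borel_measurable (\<sigma> \<Otimes>\<^sub>M \<nu>)" for x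
      unfolding g_def by measurable
    have hm: "(\<lambda>p. \<integral>\<^sup>+y. g (fst p) (snd p) y \<partial>\<nu>) \<in> borel_measurable (\<sigma> \<Otimes>\<^sub>M \<nu>)"
      using n.borel_measurable_nn_integral[of "\<lambda>p y. g (fst p) (snd p) y" "\<sigma> \<Otimes>\<^sub>M \<nu>"] gm3
      by (simp add: case_prod_beta')
    have Fm: "(\<lambda>\<zeta>. \<integral>\<^sup>+x. \<integral>\<^sup>+y. g \<zeta> x y \<partial>\<nu> \<partial>\<nu>) \<in> borel_measurable \<sigma>"
      using n.borel_measurable_nn_integral[of "\<lambda>\<zeta> x. \<integral>\<^sup>+y. g \<zeta> x y \<partial>\<nu>" \<sigma>] hm
      by (simp add: case_prod_beta')
    have inner: "(\<integral>\<^sup>+\<zeta>. \<integral>\<^sup>+y. g \<zeta> x y \<partial>\<nu> \<partial>\<sigma>) = 0" for x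
    proof -
      have "(\<integral>\<^sup>+\<zeta>. \<integral>\<^sup>+y. g \<zeta> x y \<partial>\<nu> \<partial>\<sigma>) = (\<integral>\<^sup>+y. \<integral>\<^sup>+\<zeta>. g \<zeta> x y \<partial>\<sigma> \<partial>\<nu>)"
        using sn.Fubini'[of "\<lambda>\<zeta> y. g \<zeta> x y"] gm2[of x] by (simp add: case_prod_beta')
      also have "\<dots> = (\<integral>\<^sup>+y. 0 \<partial>\<nu>)"
      proof (rule nn_integral_cong)
        fix y
        show "(\<integral>\<^sup>+\<zeta>. g \<zeta> x y \<partial>\<sigma>) = 0"
        proof (cases "x = y")
          case True then show ?thesis by (simp add: g_def)
        next
          case False
          then have "(\<integral>\<^sup>+\<zeta>. g \<zeta> x y \<partial>\<sigma>) = (\<integral>\<^sup>+\<zeta>. (if (x - y) \<bullet> \<zeta> = 0 then 1 else 0) \<partial>\<sigma>)"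
            by (simp add: g_def)
          also have "\<dots> = 0" unfolding \<sigma>_def using False by (intro sphere_int_zero) simp
          finally show ?thesis .
        qed
      qed
      finally show ?thesis by simp
    qed
    have "(\<integral>\<^sup>+\<zeta>. \<integral>\<^sup>+x. \<integral>\<^sup>+y. g \<zeta> x y \<partial>\<nu> \<partial>\<nu> \<partial>\<sigma>) = (\<integral>\<^sup>+x. \<integral>\<^sup>+\<zeta>. \<integral>\<^sup>+y. g \<zeta> x y \<partial>\<nu> \<partial>\<sigma> \<partial>\<nu>)"
      using sn.Fubini'[of "\<lambda>\<zeta> x. \<integral>\<^sup>+y. g \<zeta> x y \<partial>\<nu>"] hm by (simp add: case_prod_beta')
    also have "\<dots> = 0" using inner by simp
    finally have "AE \<zeta> in \<sigma>. (\<integral>\<^sup>+x. \<integral>\<^sup>+y. g \<zeta> x y \<partial>\<nu> \<partial>\<nu>) = 0"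
      using nn_integral_0_iff_AE[OF Fm] by simp
    then show "AE \<zeta> in sphere_measure. continuous_measure (proj_measure \<mu> \<zeta>)"
      unfolding \<sigma>_def[symmetric]
    proof eventually_elim
      case (elim \<zeta>)
      have hm\<zeta>: "(\<lambda>x. \<integral>\<^sup>+y. g \<zeta> x y \<partial>\<nu>) \<in> borel_measurable \<nu>"
        using n.borel_measurable_nn_integral[of "\<lambda>x y. g \<zeta> x y" \<nu>]
        unfolding g_def by (simp add: case_prod_beta') measurable
      have ae: "AE x in \<nu>. (\<integral>\<^sup>+y. g \<zeta> x y \<partial>\<nu>) = 0"
        using elim nn_integral_0_iff_AE[OF hm\<zeta>] by simp
      show ?case unfolding continuous_measure_def
      proof
        fix t
        define H where "H = {x::'a. x \<bullet> \<zeta> = t}"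
        have Hb: "H \<in> sets borel" unfolding H_def by measurable
        have "\<mu> H = 0"
        proof (cases "emeasure \<nu> H = 0")
          case True then show ?thesis using null Hb by simp
        next
          case False
          have "\<exists>x\<in>H. (\<integral>\<^sup>+y. g \<zeta> x y \<partial>\<nu>) = 0"
          proof (rule ccontr)
            assume "\<not> ?thesis"
            then have "AE x in \<nu>. x \<notin> H" using ae by (auto elim: AE_mp)
            then have "emeasure \<nu> H = 0"
              using AE_iff_measurable[of H \<nu> "\<lambda>x. x \<notin> H"] Hb sets\<nu>
              by (auto simp: sets_eq_imp_space_eq[OF sets\<nu>])
            then show False using False by simp
          qed
          then obtain x where xH: "x \<in> H" and x0: "(\<integral>\<^sup>+y. g \<zeta> x y \<partial>\<nu>) = 0" by blast
          have eq: "{y. (x - y) \<bullet> \<zeta> = 0 \<and> x \<noteq> y} = H - {x}"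
            using xH by (auto simp: H_def inner_diff_left)
          have Hx: "H - {x} \<in> sets borel" using Hb by auto
          have "(\<integral>\<^sup>+y. g \<zeta> x y \<partial>\<nu>) = (\<integral>\<^sup>+y. indicator (H - {x}) y \<partial>\<nu>)"
            by (intro nn_integral_cong) (auto simp: g_def eq[symmetric] split: split_indicator)
          also have "\<dots> = emeasure \<nu> (H - {x})" using Hx sets\<nu> by simp
          finally have "emeasure \<nu> (H - {x}) = 0" using x0 by simp
          then have "\<mu> (H - {x}) = 0" using null Hx by simp
          moreover have "\<mu> H = \<mu> {x} + \<mu> (H - {x})"
            using cbm_diff[OF m Hb, of "{x}"] xH by auto
          moreover have "\<mu> {x} = 0" using cont by (simp add: continuous_measure_def)
          ultimately show ?thesis by simp
        qed
        then show "proj_measure \<mu> \<zeta> {t} = 0" by (simp add: proj H_def)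
      qed
    qed
  next
    assume ae: "AE \<zeta> in sphere_measure. continuous_measure (proj_measure \<mu> \<zeta>)"
    show "continuous_measure \<mu>"
    proof (rule ccontr)
      assume "\<not> continuous_measure \<mu>"
      then obtain x0 where x0: "\<mu> {x0} \<noteq> 0" by (auto simp: continuous_measure_def)
      define f where "f \<zeta> x = (if (x - x0) \<bullet> \<zeta> = 0 \<and> x \<noteq> x0 then 1 else 0 :: ennreal)" for \<zeta> x :: 'a
      have fm: "(\<lambda>p. f (fst p) (snd p)) \<in> borel_measurable (\<sigma> \<Otimes>\<^sub>M \<nu>)"
        unfolding f_def by measurable
      have Im: "(\<lambda>\<zeta>. \<integral>\<^sup>+x. f \<zeta> x \<partial>\<nu>) \<in> borel_measurable \<sigma>"
        using n.borel_measurable_nn_integral[of f \<sigma>] fm by (simp add: case_prod_beta')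
      have "(\<integral>\<^sup>+\<zeta>. \<integral>\<^sup>+x. f \<zeta> x \<partial>\<nu> \<partial>\<sigma>) = (\<integral>\<^sup>+x. \<integral>\<^sup>+\<zeta>. f \<zeta> x \<partial>\<sigma> \<partial>\<nu>)"
        using sn.Fubini'[of f] fm by (simp add: case_prod_beta')
      also have "\<dots> = (\<integral>\<^sup>+x. 0 \<partial>\<nu>)"
      proof (rule nn_integral_cong)
        fix x
        show "(\<integral>\<^sup>+\<zeta>. f \<zeta> x \<partial>\<sigma>) = 0"
        proof (cases "x = x0")
          case True then show ?thesis by (simp add: f_def)
        next
          case False
          then have "(\<integral>\<^sup>+\<zeta>. f \<zeta> x \<partial>\<sigma>) = (\<integral>\<^sup>+\<zeta>. (if (x - x0) \<bullet> \<zeta> = 0 then 1 else 0) \<partial>\<sigma>)"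
            by (simp add: f_def)
          also have "\<dots> = 0" unfolding \<sigma>_def using False by (intro sphere_int_zero) simp
          finally show ?thesis .
        qed
      qed
      finally have "AE \<zeta> in \<sigma>. (\<integral>\<^sup>+x. f \<zeta> x \<partial>\<nu>) = 0"
        using nn_integral_0_iff_AE[OF Im] by simp
      then have "AE \<zeta> in \<sigma>. False"
        using ae unfolding \<sigma>_def[symmetric]
      proof eventually_elim
        case (elim \<zeta>)
        define H where "H = {x::'a. x \<bullet> \<zeta> = x0 \<bullet> \<zeta>}"
        have Hb: "H \<in> sets borel" unfolding H_def by measurable
        have Hx: "H - {x0} \<in> sets borel" using Hb by auto
        have "(\<integral>\<^sup>+x. f \<zeta> x \<partial>\<nu>) = (\<integral>\<^sup>+x. indicator (H - {x0}) x \<partial>\<nu>)"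
          by (intro nn_integral_cong) (auto simp: f_def H_def inner_diff_left split: split_indicator)
        also have "\<dots> = emeasure \<nu> (H - {x0})" using Hx sets\<nu> by simp
        finally have "emeasure \<nu> (H - {x0}) = 0" using elim by simp
        then have "\<mu> (H - {x0}) = 0" using null Hx by simp
        moreover have "\<mu> H = \<mu> {x0} + \<mu> (H - {x0})"
          using cbm_diff[OF m Hb, of "{x0}"] by (auto simp: H_def)
        ultimately have "\<mu> H \<noteq> 0" using x0 by simp
        moreover have "proj_measure \<mu> \<zeta> {x0 \<bullet> \<zeta>} = 0"
          using elim by (simp add: continuous_measure_def)
        ultimately show False by (simp add: proj H_def)
      qed
      then have "emeasure \<sigma> (space \<sigma>) = 0" using ae_filter_eq_bot_iff[of \<sigma>] trivial_limit_def by blast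
      then show False using sphere_pos[where 'a='a] unfolding \<sigma>_def by blast
    qed
  qed
qed


end
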